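(* Let $m=p_1^{\alpha_1}p_2^{\alpha_2}$, where $p_1,p_2>2$ are distinct primes and $\alpha_1,\alpha_2$ are positive integers. Let $t=\mathrm{ord}_m(2)$ and let $\gamma\in\mathbb{F}_{2^t}^*$ be a primitive $m$th root of unity. Then $m$ is good if and only if there is a polynomial $Q(X)=X^u+aX^v+b\in\mathbb{F}_{2^t}[X]$ (with $u,v$ nonnegative integers, $a,b\in\mathbb{F}_{2^t}$) such that (1) $ab\neq 0$; (2) the three residues $u\bmod m$, $v\bmod m$, $0$ are pairwise distinct; and (3) $Q(\gamma)=Q(\gamma^{s_{01}})=Q(\gamma^{s_{10}})=0$ and $Q(1)\neq 0$.
   Context: $\mathrm{ord}_m(2)$ is the multiplicative order of $2$ modulo $m$. The canonical set of $m$ is $S_m=\{s_{01},s_{10},s_{11}\}\subseteq\mathbb{Z}_m$, where for $\sigma=(\sigma_1,\sigma_2)\in\{0,1\}^2\setminus\{(0,0)\}$, $s_\sigma$ is the unique element of $\mathbb{Z}_m$ with $s_\sigma\equiv\sigma_1 \pmod{p_1^{\alpha_1}}$ and $s_\sigma\equiv \sigma_2\pmod{p_2^{\alpha_2}}$ (so $s_{11}=1$). An $S_m$-decoding polynomial is a polynomial $P(X)\in\mathbb{F}_{2^t}[X]$ such that $P(\gamma^s)=0$ for every $s\in S_m$ and $P(1)=1$. The number $m$ is called good if there exists an $S_m$-decoding polynomial with fewer than $4$ monomials (nonzero terms). *)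

theory Defs
  imports "HOL-Number_Theory.Number_Theory" "HOL-Computational_Algebra.Polynomial"
begin

definition canon_elem :: "nat \<Rightarrow> nat \<Rightarrow> nat \<Rightarrow> nat \<Rightarrow> nat" where
  "canon_elem q1 q2 s1 s2 =
     (THE s. s < q1 * q2 \<and> [s = s1] (mod q1) \<and> [s = s2] (mod q2))"

definition canonical_set :: "nat \<Rightarrow> nat \<Rightarrow> nat set" where
  "canonical_set q1 q2 = {canon_elem q1 q2 0 1, canon_elem q1 q2 1 0, canon_elem q1 q2 1 1}"

definition primitive_root_of_unity :: "nat \<Rightarrow> 'a::field \<Rightarrow> bool" where
  "primitive_root_of_unity m g \<longleftrightarrow> g ^ m = 1 \<and> (\<forall>k. 0 < k \<and> k < m \<longrightarrow> g ^ k \<noteq> 1)"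

definition num_monomials :: "'a::zero poly \<Rightarrow> nat" where
  "num_monomials P = card {i. coeff P i \<noteq> 0}"

definition decoding_poly :: "nat set \<Rightarrow> 'a::field \<Rightarrow> 'a poly \<Rightarrow> bool" where
  "decoding_poly S g P \<longleftrightarrow> (\<forall>s\<in>S. poly P (g ^ s) = 0) \<and> poly P 1 = 1"

definition good :: "nat \<Rightarrow> nat \<Rightarrow> 'a::field \<Rightarrow> bool" where
  "good q1 q2 g \<longleftrightarrow> (\<exists>P. decoding_poly (canonical_set q1 q2) g P \<and> num_monomials P < 4)"

end

theory Submission
  imports Defs
begin


lemma canon_prop:
  assumes "coprime q1 q2" "q1 \<noteq> 0" "q2 \<noteq> 0"
  shows "canon_elem q1 q2 s1 s2 < q1*q2 \<and> [canon_elem q1 q2 s1 s2 = s1] (mod q1) \<and> [canon_elem q1 q2 s1 s2 = s2] (mod q2)"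
  unfolding canon_elem_def
  by (rule theI'[OF binary_chinese_remainder_unique_nat[OF assms]])

lemma pow_mod_m:
  fixes x :: "'a::comm_monoid_mult"
  assumes "x ^ m = 1"
  shows "x ^ n = x ^ (n mod m)"
proof -
  have "x ^ n = x ^ (m * (n div m) + n mod m)" by simp
  also have "\<dots> = (x^m)^(n div m) * x^(n mod m)" by (metis power_add power_mult)
  finally show ?thesis using assms by simp
qed

lemma two_term:
  fixes A B g c d :: "'a::field"
  assumes "A*B = g" "g \<noteq> 0" "\<forall>x\<in>{g,A,B}. c*x^i + d*x^j = 0"
  shows "c + d = 0"
proof -
  have hA: "c*A^i = - d*A^j" and hB: "c*B^i = - d*B^j" and hg: "c*g^i = - d*g^j"
    using assms(3) by (auto simp: eq_neg_iff_add_eq_0)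
  have "(c*A^i)*(c*B^i) = (- d*A^j)*(- d*B^j)" using hA hB by simp
  hence h2: "c^2*g^i = d^2*g^j" using assms(1)
    by (simp add: power2_eq_square power_mult_distrib[symmetric] algebra_simps)
  have gj: "g^j \<noteq> 0" "g^i \<noteq> 0" using assms(2) by auto
  show ?thesis
  proof (cases "d = 0")
    case True
    then show ?thesis using hg gj assms(2) by simp
  next
    case False
    have "c*(c*g^i) = c*(-d*g^j)" using hg by simp
    hence "d^2*g^j = -c*d*g^j" using h2 by (simp add: power2_eq_square algebra_simps)
    hence "(d*d) * g^j = (-c*d) * g^j" by (simp add: power2_eq_square)
    hence "d*d = -c*d" using gj(1) by (meson mult_right_cancel)
    hence "d * d = (-c) * d" by simp
    hence "d = -c" using False by (meson mult_right_cancel)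
    thus ?thesis by simp
  qed
qed

lemma poly_sum_support:
  fixes P :: "'a::comm_semiring_1 poly"
  shows "poly P x = (\<Sum>i\<in>{i. coeff P i \<noteq> 0}. coeff P i * x^i)"
proof -
  have "poly P x = (\<Sum>i\<le>degree P. coeff P i * x ^ i)" by (rule poly_altdef)
  also have "\<dots> = (\<Sum>i\<in>{i. coeff P i \<noteq> 0}. coeff P i * x^i)"
    by (rule sum.mono_neutral_right) (auto dest: le_degree)
  finally show ?thesis .
qed

lemma finite_support: "finite {i. coeff (P::'a::zero poly) i \<noteq> 0}"
  by (rule finite_subset[of _ "{..degree P}"]) (auto dest: le_degree)


theorem lemma4:
  fixes p1 p2 a1 a2 m t :: nat and \<gamma> :: "'a::{field,finite}"
  assumes "prime p1" "prime p2" "p1 > 2" "p2 > 2" "p1 \<noteq> p2"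
    and "a1 > 0" "a2 > 0"
    and "m = p1 ^ a1 * p2 ^ a2"
    and "t = ord m 2"
    and "card (UNIV :: 'a set) = 2 ^ t"
    and "primitive_root_of_unity m \<gamma>"
  shows "good (p1 ^ a1) (p2 ^ a2) \<gamma> \<longleftrightarrow>
    (\<exists>(u::nat) (v::nat) (a::'a) (b::'a).
        a * b \<noteq> 0 \<and>
        u mod m \<noteq> v mod m \<and> u mod m \<noteq> 0 \<and> v mod m \<noteq> 0 \<and>
        (let Q = (\<lambda>x::'a. x ^ u + a * x ^ v + b) in
           Q \<gamma> = 0 \<and> Q (\<gamma> ^ canon_elem (p1 ^ a1) (p2 ^ a2) 0 1) = 0 \<and>
           Q (\<gamma> ^ canon_elem (p1 ^ a1) (p2 ^ a2) 1 0) = 0 \<and> Q 1 \<noteq> 0))"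
proof -
  define q1 where "q1 = p1 ^ a1"
  define q2 where "q2 = p2 ^ a2"
  define s01 where "s01 = canon_elem q1 q2 0 1"
  define s10 where "s10 = canon_elem q1 q2 1 0"
  define s11 where "s11 = canon_elem q1 q2 1 1"
  define A where "A = \<gamma> ^ s01"
  define B where "B = \<gamma> ^ s10"
  have cop: "coprime q1 q2" unfolding q1_def q2_def
    using assms(1,2,5,6,7) by (simp add: primes_coprime)
  have q1nz: "q1 \<noteq> 0" "q2 \<noteq> 0" unfolding q1_def q2_def using assms(1,2) by (auto simp: prime_gt_0_nat)
  have q1gt: "q1 > 1" unfolding q1_def using assms(1,6)
    by (metis one_less_power prime_gt_1_nat)
  have mq: "m = q1 * q2" using assms(8) q1_def q2_def by simp
  have "q1 \<le> q1 * q2" using q1nz by simp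
  hence m1: "m > 1" using q1gt mq by linarith
  have gm: "\<gamma> ^ m = 1" using assms(11) unfolding primitive_root_of_unity_def by simp
  have g0: "\<gamma> \<noteq> 0" using gm m1 by (metis power_0_left zero_neq_one not_one_less_zero gr_implies_not0 neq0_conv)
  note P01 = canon_prop[OF cop q1nz, of 0 1, folded s01_def]
  note P10 = canon_prop[OF cop q1nz, of 1 0, folded s10_def]
  note P11 = canon_prop[OF cop q1nz, of 1 1, folded s11_def]
  have "[s11 = 1] (mod m)" unfolding mq using P11 cop coprime_cong_mult_nat by blast
  hence s11: "s11 = 1" using P11 m1 mq cong_less_modulus_unique_nat by auto
  have "[s01 + s10 = 0 + 1] (mod q1)" using P01 P10 cong_add by blast
  moreover have "[s01 + s10 = 1 + 0] (mod q2)" using P01 P10 cong_add by blast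
  ultimately have "[s01 + s10 = 1] (mod m)" unfolding mq using cop coprime_cong_mult_nat by simp
  hence "(s01 + s10) mod m = 1" using m1 by (simp add: cong_def)
  hence AB: "A * B = \<gamma>" unfolding A_def B_def
    by (metis gm pow_mod_m power_add power_one_right)
  have roots: "\<forall>x\<in>{\<gamma>, A, B, 1}. x ^ m = 1" unfolding A_def B_def using gm
    by (auto simp: power_mult[symmetric] mult.commute[of _ m] power_mult)
  have cs: "canonical_set q1 q2 = {s01, s10, 1}" unfolding canonical_set_def s01_def s10_def
    using s11 s11_def by auto
  have "good q1 q2 \<gamma> \<longleftrightarrow>
    (\<exists>(u::nat) (v::nat) (a::'a) (b::'a).
        a * b \<noteq> 0 \<and>
        u mod m \<noteq> v mod m \<and> u mod m \<noteq> 0 \<and> v mod m \<noteq> 0 \<and>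
        (let Q = (\<lambda>x::'a. x ^ u + a * x ^ v + b) in
           Q \<gamma> = 0 \<and> Q A = 0 \<and> Q B = 0 \<and> Q 1 \<noteq> 0))"
  proof
    assume "good q1 q2 \<gamma>"
    then obtain P where dec: "decoding_poly (canonical_set q1 q2) \<gamma> P" and nm: "num_monomials P < 4"
      unfolding good_def by blast
    have ev: "poly P \<gamma> = 0" "poly P A = 0" "poly P B = 0" "poly P 1 = 1"
      using dec unfolding decoding_poly_def cs A_def B_def by auto
    define I where "I = {i. coeff P i \<noteq> 0}"
    have fI: "finite I" unfolding I_def by (rule finite_support)
    have pe: "\<And>x. poly P x = (\<Sum>i\<in>I. coeff P i * x^i)" unfolding I_def by (rule poly_sum_support)
    have cI: "card I < 4" using nm unfolding num_monomials_def I_def .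
    have "card I = 0 \<or> card I = 1 \<or> card I = 2 \<or> card I = 3" using cI by linarith
    moreover have "card I \<noteq> 0"
    proof
      assume "card I = 0" hence "I = {}" using fI by simp
      thus False using ev(4) pe[of 1] by simp
    qed
    moreover have "card I \<noteq> 1"
    proof
      assume "card I = 1" then obtain i where "I = {i}" by (rule card_1_singletonE)
      hence "\<forall>x\<in>{\<gamma>,A,B}. coeff P i * x^i + 0 * x^i = 0" using ev pe by auto
      hence "coeff P i + 0 = 0" using two_term[OF AB g0] by blast
      thus False using ev(4) pe[of 1] \<open>I = {i}\<close> by simp
    qed
    moreover have "card I \<noteq> 2"
    proof
      assume "card I = 2" then obtain i j where ij: "I = {i,j}" "i \<noteq> j" by (auto simp: card_2_iff)
      hence "\<forall>x\<in>{\<gamma>,A,B}. coeff P i * x^i + coeff P j * x^j = 0" using ev pe by auto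
      hence "coeff P i + coeff P j = 0" using two_term[OF AB g0] by blast
      thus False using ev(4) pe[of 1] ij by simp
    qed
    ultimately have "card I = 3" by blast
    then obtain i j l where ijl: "I = {i,j,l}" "i \<noteq> j" "j \<noteq> l" "i \<noteq> l" by (auto simp: card_3_iff)
    define c where "c = coeff P i"
    define d where "d = coeff P j"
    define e where "e = coeff P l"
    have nz: "c \<noteq> 0" "d \<noteq> 0" "e \<noteq> 0" using ijl unfolding c_def d_def e_def I_def by auto
    have pf: "\<And>x. poly P x = c * x^i + d * x^j + e * x^l" using pe ijl
      unfolding c_def d_def e_def by (simp add: algebra_simps)
    have P1: "c + d + e = 1" using pf[of 1] ev(4) by simp
    have zs: "\<forall>x\<in>{\<gamma>,A,B}. c * x^i + d * x^j + e * x^l = 0" using ev pf by auto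
    have rts: "\<forall>x\<in>{\<gamma>,A,B}. x ^ m = 1" using roots by auto
    have nij: "i mod m \<noteq> j mod m"
    proof
      assume h: "i mod m = j mod m"
      have "\<forall>x\<in>{\<gamma>,A,B}. (c + d) * x^i + e * x^l = 0"
      proof
        fix x assume x: "x \<in> {\<gamma>,A,B}"
        have xe: "x^j = x^i" using rts x h pow_mod_m by metis
        have z: "c * x^i + d * x^j + e * x^l = 0" using zs x by blast
        have "(c + d) * x^i + e * x^l = c * x^i + d * x^j + e * x^l" using xe by (simp add: algebra_simps)
        thus "(c + d) * x^i + e * x^l = 0" using z by simp
      qed
      hence "c + d + e = 0" using two_term[OF AB g0] by blast
      thus False using P1 by simp
    qed
    have nil: "i mod m \<noteq> l mod m"
    proof
      assume h: "i mod m = l mod m"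
      have "\<forall>x\<in>{\<gamma>,A,B}. (c + e) * x^i + d * x^j = 0"
      proof
        fix x assume x: "x \<in> {\<gamma>,A,B}"
        have xe: "x^l = x^i" using rts x h pow_mod_m by metis
        have z: "c * x^i + d * x^j + e * x^l = 0" using zs x by blast
        have "(c + e) * x^i + d * x^j = c * x^i + d * x^j + e * x^l" using xe by (simp add: algebra_simps)
        thus "(c + e) * x^i + d * x^j = 0" using z by simp
      qed
      hence "c + e + d = 0" using two_term[OF AB g0] by blast
      thus False using P1 by (simp add: algebra_simps)
    qed
    have njl: "j mod m \<noteq> l mod m"
    proof
      assume h: "j mod m = l mod m"
      have "\<forall>x\<in>{\<gamma>,A,B}. c * x^i + (d + e) * x^j = 0"
      proof
        fix x assume x: "x \<in> {\<gamma>,A,B}"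
        have xe: "x^l = x^j" using rts x h pow_mod_m by metis
        have z: "c * x^i + d * x^j + e * x^l = 0" using zs x by blast
        have "c * x^i + (d + e) * x^j = c * x^i + d * x^j + e * x^l" using xe by (simp add: algebra_simps)
        thus "c * x^i + (d + e) * x^j = 0" using z by simp
      qed
      hence "c + (d + e) = 0" using two_term[OF AB g0] by blast
      thus False using P1 by (simp add: algebra_simps)
    qed
    define u where "u = i + (m - 1) * l"
    define v where "v = j + (m - 1) * l"
    obtain k where k: "m = Suc k" using m1 by (cases m) auto
    have ul: "u + l = i + m * l" "v + l = j + m * l" unfolding u_def v_def k by simp_all
    have uv: "u mod m \<noteq> v mod m"
    proof
      assume "u mod m = v mod m"
      hence "(u + l) mod m = (v + l) mod m" by (metis mod_add_left_eq)
      thus False using nij ul by simp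
    qed
    have u0: "u mod m \<noteq> 0"
    proof
      assume "u mod m = 0"
      hence "(u + l) mod m = l mod m" by (metis mod_add_left_eq add_0)
      thus False using nil ul by simp
    qed
    have v0: "v mod m \<noteq> 0"
    proof
      assume "v mod m = 0"
      hence "(v + l) mod m = l mod m" by (metis mod_add_left_eq add_0)
      thus False using njl ul by simp
    qed
    define Q where "Q = (\<lambda>x::'a. x ^ u + (d/c) * x ^ v + e/c)"
    have hQ: "Q x = poly P x * x^((m-1)*l) / c" if x: "x ^ m = 1" for x
    proof -
      have "l + (m-1)*l = m * l" unfolding k by simp
      hence "x^l * x^((m-1)*l) = x^(m*l)" by (metis power_add)
      also have "\<dots> = 1" using x by (simp add: power_mult)
      finally have "x^l * x^((m-1)*l) = 1" .
      hence "Q x = x^i * x^((m-1)*l) + (d/c) * (x^j * x^((m-1)*l)) + (e/c) * (x^l * x^((m-1)*l))"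
        unfolding Q_def u_def v_def by (simp add: power_add)
      also have "\<dots> = poly P x * x^((m-1)*l) / c" using nz pf
        by (simp add: field_simps)
      finally show ?thesis .
    qed
    have "Q \<gamma> = 0" "Q A = 0" "Q B = 0" "Q 1 \<noteq> 0"
      using hQ roots ev nz by auto
    moreover have "(d/c) * (e/c) \<noteq> 0" using nz by simp
    ultimately show "\<exists>(u::nat) (v::nat) (a::'a) (b::'a).
        a * b \<noteq> 0 \<and>
        u mod m \<noteq> v mod m \<and> u mod m \<noteq> 0 \<and> v mod m \<noteq> 0 \<and>
        (let Q = (\<lambda>x::'a. x ^ u + a * x ^ v + b) in
           Q \<gamma> = 0 \<and> Q A = 0 \<and> Q B = 0 \<and> Q 1 \<noteq> 0)"
      using uv u0 v0 unfolding Q_def Let_def by blast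
  next
    assume "\<exists>(u::nat) (v::nat) (a::'a) (b::'a).
        a * b \<noteq> 0 \<and>
        u mod m \<noteq> v mod m \<and> u mod m \<noteq> 0 \<and> v mod m \<noteq> 0 \<and>
        (let Q = (\<lambda>x::'a. x ^ u + a * x ^ v + b) in
           Q \<gamma> = 0 \<and> Q A = 0 \<and> Q B = 0 \<and> Q 1 \<noteq> 0)"
    then obtain u v a b where h: "\<gamma> ^ u + a * \<gamma> ^ v + b = 0" "A ^ u + a * A ^ v + b = 0"
      "B ^ u + a * B ^ v + b = 0" "1 + a + b \<noteq> 0" unfolding Let_def by auto
    define P where "P = smult (inverse (1 + a + b)) (monom 1 u + monom a v + [:b:])"
    have pP: "poly P x = inverse (1 + a + b) * (x ^ u + a * x ^ v + b)" for x
      unfolding P_def by (simp add: poly_monom)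
    have "decoding_poly (canonical_set q1 q2) \<gamma> P"
      unfolding decoding_poly_def cs using h pP A_def B_def by auto
    moreover have "num_monomials P < 4"
    proof -
      have cc: "coeff [:b:] i = (if i = 0 then b else 0)" for i by (cases i) auto
      have "coeff P i = inverse (1 + a + b) * ((if u = i then 1 else 0) + (if v = i then a else 0)
          + (if i = 0 then b else 0))" for i unfolding P_def by (simp add: cc)
      hence "{i. coeff P i \<noteq> 0} \<subseteq> {u, v, 0}" by auto
      hence "card {i. coeff P i \<noteq> 0} \<le> card {u, v, 0::nat}" by (simp add: card_mono)
      also have "\<dots> \<le> 3" by (simp add: card_insert_if)
      finally show ?thesis unfolding num_monomials_def by simp
    qed
    ultimately show "good q1 q2 \<gamma>" unfolding good_def by blast
  qed
  thus ?thesis unfolding q1_def q2_def A_def B_def s01_def s10_def .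
qed

end
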